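(* Let $\mathcal{A}\subset\mathbb{Z}$ be a finite alphabet, let $G=(V,E)$ be a finite directed graph with edge labelling $\ell:E\to\mathcal{A}$, let $I\subseteq V$ be nonempty, and assume the matrix $M=\sum_{a\in\mathcal{A}}M_a$ is primitive. Let $\beta>1$ be a Pisot number, and let $\nu=(\phi^+)_*(\mu^+)$ and $\nu_I=(\phi_I^+)_*(\mu_I^+)$ be as described in the context. Then each of the measures $\nu_I$ and $\nu$ is pure: it is either absolutely continuous with respect to Lebesgue measure, or purely singular continuous, or purely atomic. The purely atomic case can only occur if the image $\phi^+(\mathcal{K}^+)$ is finite, and in that case the number of atoms is at most the number $\#V$ of vertices.
   Context: For $a\in\mathcal{A}$, $M_a$ is the $V\times V$ matrix with $(M_a)_{ij}=1$ if $(i,j)\in E$ and $\ell((i,j))=a$, and $0$ otherwise. By Perron–Frobenius, $M$ has a dominant eigenvalue $\lambda>0$ with positive left eigenvector $\mathbf v_L$ and positive right eigenvector $\mathbf v_R$, normalised by $\mathbf v_L^{\mathsf T}\mathbf v_R=1$. A path is a sequence of edges $e_1e_2\ldots$ with the terminal vertex of $e_j$ equal to the initial vertex of $e_{j+1}$. $\mathcal{K}^+\subseteq\mathcal{A}^{\mathbb{N}}$ is the set of sequences $(\ell(e_k))_{k\ge1}$ for infinite paths $e_1e_2\ldots$ in $G$, and $\mathcal{K}_I^+$ the subset obtained from infinite paths whose initial vertex lies in $I$. For a cylinder set $[\varepsilon_1,\ldots,\varepsilon_k]$ (sequences with $x_1=\varepsilon_1,\ldots,x_k=\varepsilon_k$),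 $\mu^+$ is the Borel probability measure on $\mathcal{K}^+$ with $\mu^+([\varepsilon_1,\ldots,\varepsilon_k])=\lambda^{-k}\mathbf v_L^{\mathsf T}M_{\varepsilon_1}\cdots M_{\varepsilon_k}\mathbf v_R$ (the shift-invariant measure of maximal entropy), and $\mu_I^+$ is the Borel probability measure on $\mathcal{K}_I^+$ with $\mu_I^+([\varepsilon_1,\ldots,\varepsilon_k])=\lambda^{-k}\mathbf v_I^{\mathsf T}M_{\varepsilon_1}\cdots M_{\varepsilon_k}\mathbf v_R/(\mathbf v_I^{\mathsf T}\mathbf v_R)$, where $\mathbf v_I$ is the indicator vector of $I$. A Pisot number is an algebraic integer $>1$ all of whose other Galois conjugates have modulus $<1$ (integers $\ge2$ included). The maps $\phi^+:\mathcal{K}^+\to\mathbb{R}$ and $\phi_I^+:\mathcal{K}_I^+\to\mathbb{R}$ are $(x_k)_{k\ge1}\mapsto\sum_{k\ge1}x_k\beta^{-k}$, and $f_*(\mu)$ denotes the push-forward measure. *)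

theory Defs
  imports "HOL-Analysis.Analysis" "HOL-Probability.Probability"
    "HOL-Computational_Algebra.Polynomial" "HOL-Computational_Algebra.Factorial_Ring"
begin

definition pisot :: "real \<Rightarrow> bool" where
  "pisot \<beta> \<longleftrightarrow> \<beta> > 1 \<and>
     (\<exists>p :: int poly. lead_coeff p = 1 \<and> irreducible p \<and>
        poly (map_poly real_of_int p) \<beta> = 0 \<and>
        (\<forall>z :: complex. poly (map_poly complex_of_int p) z = 0 \<and> z \<noteq> complex_of_real \<beta>
            \<longrightarrow> cmod z < 1))"

definition label_matrix :: "('v::finite \<times> 'v) set \<Rightarrow> ('v \<times> 'v \<Rightarrow> int) \<Rightarrow> int \<Rightarrow> real^'v^'v" where
  "label_matrix E lab a = (\<chi> i j. if (i, j) \<in> E \<and> lab (i, j) = a then 1 else 0)"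

definition mat_list_prod :: "(real^'n^'n) list \<Rightarrow> real^'n^'n" where
  "mat_list_prod ms = foldr (**) ms (mat 1)"

definition primitive_matrix :: "real^'n^'n \<Rightarrow> bool" where
  "primitive_matrix M \<longleftrightarrow> (\<forall>i j. M $ i $ j \<ge> 0) \<and>
     (\<exists>k\<ge>1. \<forall>i j. mat_list_prod (replicate k M) $ i $ j > 0)"

text \<open>Sequence space A^N with product sigma-algebra (index n corresponds to x_{n+1}).\<close>
definition seq_space :: "int set \<Rightarrow> (nat \<Rightarrow> int) measure" where
  "seq_space A = PiM UNIV (\<lambda>_. count_space A)"

definition cylinder :: "int set \<Rightarrow> int list \<Rightarrow> (nat \<Rightarrow> int) set" where
  "cylinder A eps = {x \<in> space (seq_space A). \<forall>i<length eps. x i = eps ! i}"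

text \<open>Label sequences of infinite paths starting in S (K^+ for S = UNIV, K_I^+ for S = I).\<close>
definition label_seqs :: "('v \<times> 'v) set \<Rightarrow> ('v \<times> 'v \<Rightarrow> int) \<Rightarrow> 'v set \<Rightarrow> (nat \<Rightarrow> int) set" where
  "label_seqs E lab S = {x. \<exists>p :: nat \<Rightarrow> 'v. p 0 \<in> S \<and>
      (\<forall>n. (p n, p (Suc n)) \<in> E \<and> x n = lab (p n, p (Suc n)))}"

definition phi :: "real \<Rightarrow> (nat \<Rightarrow> int) \<Rightarrow> real" where
  "phi \<beta> x = (\<Sum>n. real_of_int (x n) / \<beta> ^ Suc n)"

definition abs_continuous :: "real measure \<Rightarrow> bool" where
  "abs_continuous \<nu> \<longleftrightarrow> absolutely_continuous lborel \<nu>"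

definition purely_atomic :: "real measure \<Rightarrow> bool" where
  "purely_atomic \<nu> \<longleftrightarrow> (\<exists>S. countable S \<and> emeasure \<nu> (space \<nu> - S) = 0)"

definition purely_singular_continuous :: "real measure \<Rightarrow> bool" where
  "purely_singular_continuous \<nu> \<longleftrightarrow> (\<forall>x. emeasure \<nu> {x} = 0) \<and>
     (\<exists>N \<in> sets borel. emeasure lborel N = 0 \<and> emeasure \<nu> (space \<nu> - N) = 0)"

definition atoms :: "real measure \<Rightarrow> real set" where
  "atoms \<nu> = {x. emeasure \<nu> {x} > 0}"

definition pure_measure :: "real measure \<Rightarrow> bool" where
  "pure_measure \<nu> \<longleftrightarrow> abs_continuous \<nu> \<or> purely_singular_continuous \<nu> \<or> purely_atomic \<nu>"

end

theory Submission imports Defs "HOL-Probability.Stream_Space" "HOL-Probability.Product_PMF" begin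

locale gd =
  fixes A :: "int set" and E :: "('v::finite \<times> 'v) set" and lab :: "'v \<times> 'v \<Rightarrow> int"
    and vR :: "real^'v" and lam :: real and \<beta> :: real
  assumes finA: "finite A" and lab_in: "\<forall>e\<in>E. lab e \<in> A"
    and lam_pos: "lam > 0" and vR_pos: "\<forall>i. vR $ i > 0"
    and vR_eig: "(\<Sum>a\<in>A. label_matrix E lab a) *v vR = lam *\<^sub>R vR"
    and prim: "primitive_matrix (\<Sum>a\<in>A. label_matrix E lab a)"
    and beta: "\<beta> > 1"
begin

abbreviation "MM \<equiv> (\<Sum>a\<in>A. label_matrix E lab a)"

lemma MM_entry: "MM $ i $ j = (if (i,j) \<in> E then 1 else 0)"
proof -
  have "MM $ i $ j = (\<Sum>a\<in>A. (if (i, j) \<in> E \<and> lab (i, j) = a then 1 else 0))"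
    by (simp add: sum_component label_matrix_def)
  also have "\<dots> = (if (i,j) \<in> E then 1 else 0)"
    using lab_in finA by (auto simp: sum.delta)
  finally show ?thesis .
qed

lemma row_sum: "(\<Sum>j\<in>UNIV. if (i,j) \<in> E then vR $ j else 0) = lam * vR $ i"
proof -
  have "(MM *v vR) $ i = lam * vR $ i" using vR_eig by simp
  moreover have "(MM *v vR) $ i = (\<Sum>j\<in>UNIV. MM $ i $ j * vR $ j)"
    by (simp only: matrix_vector_mult_def vec_lambda_beta)
  moreover have "\<dots> = (\<Sum>j\<in>UNIV. if (i,j) \<in> E then vR $ j else 0)"
    by (simp only: MM_entry) (rule sum.cong, auto)
  ultimately show ?thesis by simp
qed

lemma vR_nz[simp]: "vR $ i \<noteq> 0" using vR_pos by (metis less_irrefl)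
lemma vR_gt[simp]: "vR $ i > 0" using vR_pos by blast

definition Pr :: "'v \<Rightarrow> 'v \<Rightarrow> real" where
  "Pr i j = (if (i,j) \<in> E then vR $ j / (lam * vR $ i) else 0)"

lemma Pr_nonneg: "Pr i j \<ge> 0"
  using lam_pos by (auto simp: Pr_def intro!: divide_nonneg_pos mult_pos_pos less_imp_le)

lemma Pr_pos: "(i,j) \<in> E \<Longrightarrow> Pr i j > 0"
  using vR_pos lam_pos by (auto simp: Pr_def)

lemma Pr_sum: "(\<Sum>j\<in>UNIV. Pr i j) = 1"
proof -
  have "(\<Sum>j\<in>UNIV. Pr i j) = (\<Sum>j\<in>UNIV. (if (i,j) \<in> E then vR $ j else 0) / (lam * vR $ i))"
    by (auto simp: Pr_def intro!: sum.cong)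
  also have "\<dots> = (\<Sum>j\<in>UNIV. if (i,j) \<in> E then vR $ j else 0) / (lam * vR $ i)"
    by (simp add: sum_divide_distrib)
  also have "\<dots> = 1" using row_sum vR_pos[rule_format, of i] lam_pos by simp
  finally show ?thesis .
qed

definition row :: "'v \<Rightarrow> 'v pmf" where
  "row i = embed_pmf (Pr i)"

lemma pmf_row: "pmf (row i) j = Pr i j"
  unfolding row_def
  by (rule pmf_embed_pmf) (auto simp: Pr_nonneg nn_integral_count_space_finite Pr_sum
      sum_ennreal)

lemma set_row: "set_pmf (row i) = {j. (i,j) \<in> E}"
  by (auto simp: set_pmf_eq pmf_row Pr_def dest: Pr_pos) (use vR_pos lam_pos in auto)

definition Q :: "('v \<Rightarrow> 'v) pmf" where
  "Q = Pi_pmf UNIV undefined row"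

lemma Q_comp: "map_pmf (\<lambda>f. f j) Q = row j"
  unfolding Q_def by (subst Pi_pmf_component) auto

lemma set_Q: "T \<in> set_pmf Q \<Longrightarrow> (j, T j) \<in> E"
proof -
  assume "T \<in> set_pmf Q"
  hence "T j \<in> set_pmf (map_pmf (\<lambda>f. f j) Q)" by auto
  thus ?thesis by (simp add: Q_comp set_row)
qed

lemma has_succ: "\<exists>j. (i,j) \<in> E"
proof (rule ccontr)
  assume "\<not> ?thesis"
  hence "(\<Sum>j\<in>UNIV. if (i,j) \<in> E then vR $ j else 0) = 0" by simp
  with row_sum vR_pos[rule_format, of i] lam_pos show False by simp
qed

definition succ :: "'v \<Rightarrow> 'v" where "succ i = (SOME j. (i,j) \<in> E)"
lemma succ: "(i, succ i) \<in> E" unfolding succ_def using has_succ by (rule someI_ex)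

definition nxt :: "'v \<Rightarrow> ('v \<Rightarrow> 'v) \<Rightarrow> 'v" where
  "nxt i T = (if (i, T i) \<in> E then T i else succ i)"

lemma nxt_E: "(i, nxt i T) \<in> E" by (simp add: nxt_def succ)
lemma nxt_Q: "T \<in> set_pmf Q \<Longrightarrow> nxt i T = T i" by (simp add: nxt_def set_Q)

primrec pth :: "'v \<Rightarrow> ('v \<Rightarrow> 'v) stream \<Rightarrow> nat \<Rightarrow> 'v" where
  "pth j \<omega> 0 = j"
| "pth j \<omega> (Suc n) = nxt (pth j \<omega> n) (\<omega> !! n)"

definition lbl :: "'v \<Rightarrow> ('v \<Rightarrow> 'v) stream \<Rightarrow> nat \<Rightarrow> int" where
  "lbl j \<omega> n = lab (pth j \<omega> n, pth j \<omega> (Suc n))"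

lemma pth_Stream: "pth j (T ## \<omega>) (Suc n) = pth (nxt j T) \<omega> n"
  by (induction n) auto

lemma lbl_Stream: "lbl j (T ## \<omega>) = case_nat (lab (j, nxt j T)) (lbl (nxt j T) \<omega>)"
proof
  fix n show "lbl j (T ## \<omega>) n = case_nat (lab (j, nxt j T)) (lbl (nxt j T) \<omega>) n"
  proof (cases n)
    case 0 thus ?thesis by (simp add: lbl_def)
  next
    case (Suc m) thus ?thesis by (simp only: lbl_def pth_Stream nat.case)
  qed
qed

lemma pth_E: "(pth j \<omega> n, pth j \<omega> (Suc n)) \<in> E" by (simp only: pth.simps nxt_E)

lemma lbl_A: "lbl j \<omega> n \<in> A" using lab_in pth_E by (auto simp: lbl_def)

lemma lbl_label_seqs: "lbl j \<omega> \<in> label_seqs E lab {j}"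
  unfolding label_seqs_def by (rule CollectI, rule exI[of _ "pth j \<omega>"]) (use pth_E in \<open>auto simp: lbl_def simp del: pth.simps(2)\<close>)

abbreviation "SS \<equiv> stream_space (measure_pmf Q)"

lemma measurable_pth: "(\<lambda>\<omega>. pth j \<omega> n) \<in> measurable SS (count_space UNIV)"
proof (induction n)
  case 0 then show ?case by simp
next
  case (Suc n)
  have "(\<lambda>\<omega>. (\<lambda>i \<omega>. nxt i (\<omega> !! n)) (pth j \<omega> n) \<omega>) \<in> measurable SS (count_space UNIV)"
    by (rule measurable_compose_countable'[OF _ Suc]) (auto intro: measurable_compose[OF measurable_snth])
  thus ?case by simp
qed

lemma measurable_lbl_n: "(\<lambda>\<omega>. lbl j \<omega> n) \<in> measurable SS (count_space A)"
proof -
  have "(\<lambda>\<omega>. (\<lambda>i \<omega>. lab (i, pth j \<omega> (Suc n))) (pth j \<omega> n) \<omega>) \<in> measurable SS (count_space UNIV)"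
  proof (rule measurable_compose_countable'[where g="\<lambda>\<omega>. pth j \<omega> n" and I=UNIV, OF _ measurable_pth])
    fix i
    have "(\<lambda>\<omega>. (\<lambda>i' \<omega>. lab (i, i')) (pth j \<omega> (Suc n)) \<omega>) \<in> measurable SS (count_space UNIV)"
      by (rule measurable_compose_countable'[where g="\<lambda>\<omega>. pth j \<omega> (Suc n)" and I=UNIV, OF _ measurable_pth]) auto
    thus "(\<lambda>\<omega>. lab (i, pth j \<omega> (Suc n))) \<in> measurable SS (count_space UNIV)" by simp
  qed auto
  hence m: "(\<lambda>\<omega>. lbl j \<omega> n) \<in> measurable SS (count_space UNIV)" by (simp add: lbl_def)
  have c: "countable A" using finA by (rule countable_finite)
  show ?thesis
    unfolding measurable_count_space_eq2_countable
    using lbl_A measurable_sets[OF m] by auto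
qed

lemma measurable_lbl: "lbl j \<in> measurable SS (seq_space A)"
  unfolding seq_space_def
  by (rule measurable_PiM_single'[where f="\<lambda>n \<omega>. lbl j \<omega> n", simplified])
     (auto simp: measurable_lbl_n lbl_A)

lemma prob_SS: "prob_space SS"
  by (rule prob_space.prob_space_stream_space[OF prob_space_measure_pmf])

lemma sets_lbl_pred: "X \<in> sets (seq_space A) \<Longrightarrow> {\<omega> \<in> space SS. lbl j \<omega> \<in> X} \<in> sets SS"
  using measurable_sets[OF measurable_lbl] by (simp add: vimage_def Int_def conj_commute)

lemma nn_integral_row: "(\<integral>\<^sup>+t. g (t j) \<partial>measure_pmf Q) = ennreal (\<Sum>j'\<in>UNIV. Pr j j' * enn2real (g j'))"
  if "\<And>j'. g j' < \<infinity>"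
proof -
  have "(\<integral>\<^sup>+t. g (t j) \<partial>measure_pmf Q) = (\<integral>\<^sup>+j'. g j' \<partial>measure_pmf (map_pmf (\<lambda>t. t j) Q))"
    by simp
  also have "\<dots> = (\<integral>\<^sup>+j'. g j' \<partial>measure_pmf (row j))" by (simp add: Q_comp)
  also have "\<dots> = (\<Sum>j'\<in>UNIV. ennreal (Pr j j') * g j')"
    by (simp add: nn_integral_measure_pmf nn_integral_count_space_finite pmf_row)
  also have "\<dots> = (\<Sum>j'\<in>UNIV. ennreal (Pr j j' * enn2real (g j')))"
    using that by (intro sum.cong refl) (simp add: ennreal_mult Pr_nonneg ennreal_enn2real_if less_top[symmetric])
  also have "\<dots> = ennreal (\<Sum>j'\<in>UNIV. Pr j j' * enn2real (g j'))"
    by (rule sum_ennreal) (simp add: Pr_nonneg)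
  finally show ?thesis .
qed

lemma step:
  assumes X: "X \<in> sets (seq_space A)"
  shows "\<P>(\<omega> in SS. lbl j \<omega> \<in> X) =
     (\<Sum>j'\<in>UNIV. Pr j j' * \<P>(\<omega> in SS. case_nat (lab (j,j')) (lbl j' \<omega>) \<in> X))"
proof -
  interpret S: prob_space SS by (rule prob_SS)
  let ?g = "\<lambda>j'. ennreal (\<P>(\<omega> in SS. case_nat (lab (j,j')) (lbl j' \<omega>) \<in> X))"
  have "ennreal (\<P>(\<omega> in SS. lbl j \<omega> \<in> X)) = (\<integral>\<^sup>+t. ennreal (\<P>(\<omega> in SS. lbl j (t ## \<omega>) \<in> X)) \<partial>measure_pmf Q)"
    by (rule prob_space.prob_stream_space[OF prob_space_measure_pmf]) (rule sets_lbl_pred[OF X])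
  also have "\<dots> = (\<integral>\<^sup>+t. ?g (t j) \<partial>measure_pmf Q)"
    by (rule nn_integral_cong_AE) (simp add: AE_measure_pmf_iff lbl_Stream nxt_Q)
  also have "\<dots> = ennreal (\<Sum>j'\<in>UNIV. Pr j j' * enn2real (?g j'))"
    by (rule nn_integral_row) simp
  finally show ?thesis
    by (subst (asm) ennreal_inj) (auto intro!: sum_nonneg mult_nonneg_nonneg Pr_nonneg)
qed

lemma space_seq: "space (seq_space A) = {x. \<forall>n. x n \<in> A}"
  by (auto simp: seq_space_def space_PiM PiE_def extensional_def)

lemma cylinder_sets: "cylinder A eps \<in> sets (seq_space A)"
proof -
  have "cylinder A eps = {x \<in> space (seq_space A). \<forall>i\<in>{..<length eps}. x i = eps ! i}"
    by (auto simp: cylinder_def)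
  also have "\<dots> \<in> sets (seq_space A)"
  proof (intro sets.sets_Collect_finite_All)
    fix i
    have "(\<lambda>x. x i) \<in> measurable (seq_space A) (count_space A)"
      unfolding seq_space_def by (rule measurable_component_singleton) simp
    from measurable_sets[OF this, of "{eps ! i} \<inter> A"]
    have "(\<lambda>x. x i) -` ({eps ! i} \<inter> A) \<inter> space (seq_space A) \<in> sets (seq_space A)" by simp
    moreover have "(\<lambda>x. x i) -` ({eps ! i} \<inter> A) \<inter> space (seq_space A) = {x \<in> space (seq_space A). x i = eps ! i}"
      by (auto simp: space_seq)
    ultimately show "{x \<in> space (seq_space A). x i = eps ! i} \<in> sets (seq_space A)" by simp
  qed auto
  finally show ?thesis .
qed

lemma lbl_space: "lbl j \<omega> \<in> space (seq_space A)"
  using lbl_A by (simp add: space_seq)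

lemma cyl_prob:
  "\<P>(\<omega> in SS. lbl j \<omega> \<in> cylinder A eps) =
     inverse (lam ^ length eps) * (mat_list_prod (map (label_matrix E lab) eps) *v vR) $ j / vR $ j"
proof (induction eps arbitrary: j)
  case Nil
  interpret S: prob_space SS by (rule prob_SS)
  have "{\<omega> \<in> space SS. lbl j \<omega> \<in> cylinder A []} = space SS"
    using lbl_space by (auto simp: cylinder_def)
  then show ?case using vR_pos[rule_format, of j]
    by (simp add: S.prob_space mat_list_prod_def)
next
  case (Cons a w)
  let ?v = "mat_list_prod (map (label_matrix E lab) w) *v vR"
  have eq: "Pr j j' * \<P>(\<omega> in SS. case_nat (lab (j,j')) (lbl j' \<omega>) \<in> cylinder A (a # w)) =
      (if (j,j') \<in> E \<and> lab (j,j') = a then vR $ j' / (lam * vR $ j) else 0) *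
       (inverse (lam ^ length w) * ?v $ j' / vR $ j')" for j'
  proof (cases "(j,j') \<in> E")
    case True
    hence "lab (j,j') \<in> A" using lab_in by auto
    hence "{\<omega> \<in> space SS. case_nat (lab (j,j')) (lbl j' \<omega>) \<in> cylinder A (a # w)} =
        (if lab (j,j') = a then {\<omega> \<in> space SS. lbl j' \<omega> \<in> cylinder A w} else {})"
      using lbl_space by (auto simp: cylinder_def space_seq nth_Cons split: nat.splits)
    then show ?thesis using True Cons.IH[of j'] by (simp add: Pr_def)
  qed (simp add: Pr_def)
  have "\<P>(\<omega> in SS. lbl j \<omega> \<in> cylinder A (a # w)) =
    (\<Sum>j'\<in>UNIV. (if (j,j') \<in> E \<and> lab (j,j') = a then vR $ j' / (lam * vR $ j) else 0) *
       (inverse (lam ^ length w) * ?v $ j' / vR $ j'))"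
    by (subst step[OF cylinder_sets]) (simp add: eq)
  also have "\<dots> = (\<Sum>j'\<in>UNIV. label_matrix E lab a $ j $ j' * ?v $ j') * inverse (lam ^ Suc (length w)) / vR $ j"
    unfolding sum_distrib_right sum_divide_distrib
    using vR_pos lam_pos
    by (intro sum.cong refl) (auto simp: label_matrix_def field_simps)
  also have "\<dots> = inverse (lam ^ length (a # w)) * (mat_list_prod (map (label_matrix E lab) (a # w)) *v vR) $ j / vR $ j"
  proof -
    have "mat_list_prod (map (label_matrix E lab) (a # w)) *v vR = label_matrix E lab a *v ?v"
      by (simp add: mat_list_prod_def matrix_vector_mul_assoc)
    moreover have "(label_matrix E lab a *v ?v) $ j = (\<Sum>j'\<in>UNIV. label_matrix E lab a $ j $ j' * ?v $ j')"
      by (simp only: matrix_vector_mult_def vec_lambda_beta)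
    ultimately show ?thesis by simp
  qed
  finally show ?case .
qed

definition CYL :: "(nat \<Rightarrow> int) set set" where
  "CYL = {cylinder A eps | eps. set eps \<subseteq> A} \<union> {{}}"

lemma cylinder_Int:
  "cylinder A u \<inter> cylinder A w =
     (if (\<forall>i<min (length u) (length w). u ! i = w ! i)
      then cylinder A (if length u \<le> length w then w else u) else {})"
proof (cases "\<forall>i<min (length u) (length w). u ! i = w ! i")
  case True
  then show ?thesis by (auto simp: cylinder_def)
next
  case False
  then obtain i where "i < length u" "i < length w" "u ! i \<noteq> w ! i" by auto
  then show ?thesis by (auto simp: cylinder_def)
qed

lemma cyl_Int_CYL: "set u \<subseteq> A \<Longrightarrow> set w \<subseteq> A \<Longrightarrow> cylinder A u \<inter> cylinder A w \<in> CYL"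
proof (cases "\<forall>i<min (length u) (length w). u ! i = w ! i")
  case True
  assume "set u \<subseteq> A" "set w \<subseteq> A"
  moreover have "cylinder A u \<inter> cylinder A w = cylinder A (if length u \<le> length w then w else u)"
    using True by (simp add: cylinder_Int)
  ultimately show ?thesis unfolding CYL_def
    by (intro UnI1 CollectI exI[of _ "if length u \<le> length w then w else u"]) auto
next
  case False
  then have "cylinder A u \<inter> cylinder A w = {}" by (simp only: cylinder_Int if_False)
  then show ?thesis by (simp add: CYL_def)
qed

lemma Int_stable_CYL: "Int_stable CYL"
  unfolding Int_stable_def
proof safe
  fix a b assume "a \<in> CYL" "b \<in> CYL"
  then show "a \<inter> b \<in> CYL"
  proof (cases "a = {} \<or> b = {}")
    case False
    with \<open>a \<in> CYL\<close> \<open>b \<in> CYL\<close> obtain u w where "a = cylinder A u" "set u \<subseteq> A"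
      "b = cylinder A w" "set w \<subseteq> A" by (auto simp: CYL_def)
    thus ?thesis using cyl_Int_CYL by simp
  qed (auto simp: CYL_def)
qed

lemma CYL_Pow: "CYL \<subseteq> Pow (space (seq_space A))"
  by (auto simp: CYL_def cylinder_def)

lemma sets_seq_CYL: "sets (seq_space A) = sigma_sets (space (seq_space A)) CYL"
proof
  show "sigma_sets (space (seq_space A)) CYL \<subseteq> sets (seq_space A)"
    by (rule sets.sigma_sets_subset) (auto simp: CYL_def cylinder_sets)
next
  let ?\<Omega> = "space (seq_space A)"
  interpret S: sigma_algebra ?\<Omega> "sigma_sets ?\<Omega> CYL"
    by (rule sigma_algebra_sigma_sets) (rule CYL_Pow)
  have sp: "(\<Pi>\<^sub>E i\<in>(UNIV::nat set). space (count_space A)) = ?\<Omega>"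
    by (simp add: seq_space_def space_PiM)
  have "sets (seq_space A) = sigma_sets ?\<Omega> {{f\<in>?\<Omega>. f i \<in> X} | i X. X \<in> sets (count_space A)}"
    unfolding seq_space_def sets_PiM_single by (simp add: space_PiM)
  also have "\<dots> \<subseteq> sigma_sets ?\<Omega> CYL"
  proof (rule sigma_sets_mono, safe)
    fix i X assume X: "X \<in> sets (count_space A)"
    let ?W = "{w. set w \<subseteq> A \<and> length w = Suc i \<and> w ! i \<in> X}"
    have fin: "finite ?W"
      by (rule finite_subset[OF _ finite_lists_length_eq[OF finA, of "Suc i"]]) auto
    have eq: "{f\<in>?\<Omega>. f i \<in> X} = (\<Union>w\<in>?W. cylinder A w)"
    proof safe
      fix f assume f: "f \<in> ?\<Omega>" "f i \<in> X"
      let ?w = "map f [0..<Suc i]"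
      have "?w \<in> ?W" using f by (auto simp: space_seq nth_append simp del: upt_Suc)
      moreover have "f \<in> cylinder A ?w" using f by (auto simp: cylinder_def simp del: upt_Suc)
      ultimately show "f \<in> (\<Union>w\<in>?W. cylinder A w)" by blast
    qed (auto simp: cylinder_def)
    have "(\<Union>w\<in>?W. cylinder A w) \<in> sigma_sets ?\<Omega> CYL"
      using fin by (intro S.finite_UN) (auto simp: CYL_def intro: sigma_sets.Basic)
    thus "{f\<in>?\<Omega>. f i \<in> X} \<in> sigma_sets ?\<Omega> CYL" using eq by simp
  qed
  finally show "sets (seq_space A) \<subseteq> sigma_sets ?\<Omega> CYL" .
qed

lemma emeasure_distr_lbl: "Y \<in> sets (seq_space A) \<Longrightarrow>
   emeasure (distr SS (seq_space A) (lbl j)) Y = ennreal (\<P>(\<omega> in SS. lbl j \<omega> \<in> Y))"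
proof -
  assume Y: "Y \<in> sets (seq_space A)"
  interpret S: prob_space SS by (rule prob_SS)
  have "emeasure (distr SS (seq_space A) (lbl j)) Y = emeasure SS (lbl j -` Y \<inter> space SS)"
    by (rule emeasure_distr[OF measurable_lbl Y])
  also have "lbl j -` Y \<inter> space SS = {\<omega> \<in> space SS. lbl j \<omega> \<in> Y}" by auto
  finally show ?thesis by (simp add: S.emeasure_eq_measure)
qed

lemma mix_eq:
  fixes \<rho> :: "(nat \<Rightarrow> int) measure" and w :: "'v \<Rightarrow> real"
  assumes sets: "sets \<rho> = sets (seq_space A)" and wnn: "\<forall>j. w j \<ge> 0" and wsum: "(\<Sum>j\<in>UNIV. w j) = 1"
  and cyl: "\<forall>eps. set eps \<subseteq> A \<longrightarrow> emeasure \<rho> (cylinder A eps) = ennreal (\<Sum>j\<in>UNIV. w j *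
      (inverse (lam ^ length eps) * (mat_list_prod (map (label_matrix E lab) eps) *v vR) $ j / vR $ j))"
  and X: "X \<in> sets (seq_space A)"
  shows "emeasure \<rho> X = ennreal (\<Sum>j\<in>UNIV. w j * \<P>(\<omega> in SS. lbl j \<omega> \<in> X))"
proof -
  interpret S: prob_space SS by (rule prob_SS)
  define \<pi> where "\<pi> = embed_pmf w"
  have pmf_pi: "pmf \<pi> j = w j" for j
    unfolding \<pi>_def
    by (rule pmf_embed_pmf) (auto simp: wnn nn_integral_count_space_finite wsum sum_ennreal)
  define N where "N j = distr SS (seq_space A) (lbl j)" for j
  define B where "B = measure_pmf \<pi> \<bind> N"
  have N_sub: "N \<in> measurable (measure_pmf \<pi>) (subprob_algebra (seq_space A))"
  proof -
    have "N j \<in> space (subprob_algebra (seq_space A))" for j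
    proof -
      have "prob_space (N j)" unfolding N_def
        by (rule S.prob_space_distr[OF measurable_lbl])
      thus ?thesis by (auto simp: space_subprob_algebra N_def prob_space_imp_subprob_space)
    qed
    thus ?thesis by simp
  qed
  have B_eq: "emeasure B Y = ennreal (\<Sum>j\<in>UNIV. w j * \<P>(\<omega> in SS. lbl j \<omega> \<in> Y))"
    if Y: "Y \<in> sets (seq_space A)" for Y
  proof -
    have "emeasure B Y = (\<integral>\<^sup>+j. emeasure (N j) Y \<partial>measure_pmf \<pi>)"
      unfolding B_def by (rule emeasure_bind[OF _ N_sub Y]) simp
    also have "\<dots> = (\<Sum>j\<in>UNIV. ennreal (w j) * ennreal (\<P>(\<omega> in SS. lbl j \<omega> \<in> Y)))"
      by (simp add: nn_integral_measure_pmf nn_integral_count_space_finite pmf_pi N_def emeasure_distr_lbl[OF Y])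
    also have "\<dots> = ennreal (\<Sum>j\<in>UNIV. w j * \<P>(\<omega> in SS. lbl j \<omega> \<in> Y))"
      by (subst sum_ennreal[symmetric]) (auto simp: wnn ennreal_mult)
    finally show ?thesis .
  qed
  have sets_B: "sets B = sets (seq_space A)"
    unfolding B_def by (rule sets_bind) (auto simp: N_def)
  have "\<rho> = B"
  proof (rule measure_eqI_generator_eq[OF Int_stable_CYL CYL_Pow])
    show "sets \<rho> = sigma_sets (space (seq_space A)) CYL" using sets sets_seq_CYL by simp
    show "sets B = sigma_sets (space (seq_space A)) CYL" using sets_B sets_seq_CYL by simp
    show "range (\<lambda>i. space (seq_space A)) \<subseteq> CYL"
      unfolding CYL_def by (auto intro!: exI[of _ "[]"] simp: cylinder_def)
    show "(\<Union>i. space (seq_space A)) = space (seq_space A)" by simp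
    show "emeasure \<rho> (space (seq_space A)) \<noteq> \<infinity>" for i :: nat
    proof -
      have "space (seq_space A) = cylinder A []" by (simp add: cylinder_def)
      thus ?thesis using cyl by simp
    qed
    fix Y assume "Y \<in> CYL"
    then show "emeasure \<rho> Y = emeasure B Y"
    proof (cases "Y = {}")
      case False
      with \<open>Y \<in> CYL\<close> obtain eps where Y: "Y = cylinder A eps" "set eps \<subseteq> A" by (auto simp: CYL_def)
      show ?thesis using cyl Y B_eq[OF cylinder_sets] by (simp add: cyl_prob)
    qed simp
  qed
  thus ?thesis using B_eq[OF X] by simp
qed

definition Bd :: real where "Bd = (\<Sum>a\<in>A. \<bar>real_of_int a\<bar>)"

lemma Bd: "x \<in> space (seq_space A) \<Longrightarrow> \<bar>real_of_int (x n)\<bar> \<le> Bd"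
  unfolding Bd_def using finA
  by (intro member_le_sum[where f="\<lambda>a. \<bar>real_of_int a\<bar>", OF _ _ finA]) (auto simp: space_seq)

lemma phi_summable: assumes x: "x \<in> space (seq_space A)"
  shows "summable (\<lambda>n. real_of_int (x n) / \<beta> ^ Suc n)"
proof (rule summable_comparison_test')
  show "summable (\<lambda>n. Bd * inverse \<beta> ^ n)"
    using beta by (intro summable_mult summable_geometric) (auto simp: inverse_less_1_iff)
  fix n
  have "\<bar>real_of_int (x n)\<bar> / \<beta> ^ Suc n \<le> Bd / \<beta> ^ Suc n"
    using Bd[OF x] beta by (intro divide_right_mono) auto
  also have "\<dots> \<le> Bd / \<beta> ^ n"
    using beta Bd[OF x, of 0] by (intro divide_left_mono) auto
  finally show "norm (real_of_int (x n) / \<beta> ^ Suc n) \<le> Bd * inverse \<beta> ^ n"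
    using beta by (simp add: abs_divide power_inverse divide_inverse_commute abs_mult)
qed

lemma phi_case_nat: assumes y: "y \<in> space (seq_space A)"
  shows "phi \<beta> (case_nat a y) = (real_of_int a + phi \<beta> y) / \<beta>"
proof -
  let ?f = "\<lambda>n. real_of_int (case_nat a y n) / \<beta> ^ Suc n"
  have s: "summable (\<lambda>n. real_of_int (y n) / \<beta> ^ Suc n)" by (rule phi_summable[OF y])
  have eq: "(\<lambda>n. ?f (Suc n)) = (\<lambda>n. (real_of_int (y n) / \<beta> ^ Suc n) / \<beta>)"
    by (auto simp: field_simps)
  have "summable (\<lambda>n. ?f (Suc n))" unfolding eq by (intro summable_divide s)
  hence sf: "summable ?f" by (rule iffD1[OF summable_Suc_iff])
  have "phi \<beta> (case_nat a y) = ?f 0 + (\<Sum>n. ?f (Suc n))"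
    unfolding phi_def using suminf_split_head[OF sf] by simp
  also have "(\<Sum>n. ?f (Suc n)) = phi \<beta> y / \<beta>"
    unfolding eq phi_def by (rule suminf_divide[OF s])
  finally show ?thesis by (simp add: add_divide_distrib)
qed

lemma phi_measurable: "phi \<beta> \<in> borel_measurable (seq_space A)"
proof -
  have "(\<lambda>x. real_of_int (x n) / \<beta> ^ Suc n) \<in> borel_measurable (seq_space A)" for n
  proof -
    have "(\<lambda>x. x n) \<in> measurable (seq_space A) (count_space A)"
      unfolding seq_space_def by (rule measurable_component_singleton) simp
    thus ?thesis by (rule measurable_compose) simp
  qed
  hence "(\<lambda>x. \<Sum>n. real_of_int (x n) / \<beta> ^ Suc n) \<in> borel_measurable (seq_space A)"
    by (rule borel_measurable_suminf)
  thus ?thesis unfolding phi_def[abs_def] .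
qed

end

context gd begin

lemma sum_pos_ex: "(\<Sum>l\<in>UNIV. f l) > (0::real) \<Longrightarrow> \<exists>l. f l > 0"
proof (rule ccontr)
  assume "\<not> (\<exists>l. f l > 0)" "(\<Sum>l\<in>UNIV. f l) > 0"
  moreover have "(\<Sum>l\<in>UNIV. f l) \<le> 0" using \<open>\<not> _\<close> by (intro sum_nonpos) (auto simp: not_less)
  ultimately show False by simp
qed

lemma mat_pow_reach: "mat_list_prod (replicate k MM) $ i $ j > 0 \<Longrightarrow> (i,j) \<in> E\<^sup>*"
proof (induction k arbitrary: i)
  case 0
  then show ?case by (auto simp: mat_list_prod_def mat_def split: if_splits)
next
  case (Suc k)
  have "mat_list_prod (replicate (Suc k) MM) = MM ** mat_list_prod (replicate k MM)"
    by (simp add: mat_list_prod_def)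
  with Suc.prems have "(\<Sum>l\<in>UNIV. MM $ i $ l * mat_list_prod (replicate k MM) $ l $ j) > 0"
    by (simp add: matrix_matrix_mult_def)
  then obtain l where l: "MM $ i $ l * mat_list_prod (replicate k MM) $ l $ j > 0"
    using sum_pos_ex by blast
  hence il: "(i,l) \<in> E" and p: "mat_list_prod (replicate k MM) $ l $ j > 0"
    unfolding MM_entry by (auto split: if_splits)
  have "(l,j) \<in> E\<^sup>*" by (rule Suc.IH[OF p])
  thus ?case by (rule converse_rtrancl_into_rtrancl[OF il])
qed

lemma reach: "(i,j) \<in> E\<^sup>*"
proof -
  obtain k where "\<forall>i j. mat_list_prod (replicate k MM) $ i $ j > 0"
    using prim unfolding primitive_matrix_def by blast
  thus ?thesis using mat_pow_reach by blast
qed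

lemma max_closed:
  assumes le: "\<forall>j. g j \<le> m" and eq: "m = (\<Sum>j\<in>UNIV. Pr i j * g j)" and ij: "(i,j) \<in> E"
  shows "g j = m"
proof -
  have "(\<Sum>j\<in>UNIV. Pr i j * (m - g j)) = (\<Sum>j\<in>UNIV. Pr i j * m) - (\<Sum>j\<in>UNIV. Pr i j * g j)"
    by (simp only: right_diff_distrib sum_subtractf)
  also have "(\<Sum>j\<in>UNIV. Pr i j * m) = m"
    by (simp only: sum_distrib_right[symmetric] Pr_sum mult_1)
  finally have z: "(\<Sum>j\<in>UNIV. Pr i j * (m - g j)) = 0" using eq by simp
  have nn: "\<And>j'. 0 \<le> Pr i j' * (m - g j')"
    using le Pr_nonneg by (intro mult_nonneg_nonneg) auto
  have fu: "finite (UNIV::'v set)" by simp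
  have "\<forall>j'\<in>UNIV. Pr i j' * (m - g j') = 0"
    using sum_nonneg_eq_0_iff[OF fu, of "\<lambda>j'. Pr i j' * (m - g j')"] nn z by blast
  hence "Pr i j * (m - g j) = 0" by blast
  thus ?thesis using Pr_pos[OF ij] by simp
qed

lemma harmonic_const:
  assumes h: "\<And>i. f i = (\<Sum>j\<in>UNIV. Pr i j * f j)"
  shows "f i = f i'"
proof -
  define m where "m = Max (range f)"
  have le: "\<forall>j. f j \<le> m" unfolding m_def by simp
  have "m \<in> range f" unfolding m_def by (rule Max_in) auto
  then obtain i0 where i0: "f i0 = m" by auto
  have "f j = m" if "(i0, j) \<in> E\<^sup>*" for j
    using that
  proof (induction rule: rtrancl_induct)
    case base then show ?case by (rule i0)
  next
    case (step y z)
    have "m = (\<Sum>j\<in>UNIV. Pr y j * f j)" using h[of y] step(3) by simp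
    thus ?case by (rule max_closed[OF le _ step(2)])
  qed
  thus ?thesis using reach[of i0 i] reach[of i0 i'] by simp
qed

definition inv_set :: "real set \<Rightarrow> bool" where
  "inv_set Z \<longleftrightarrow> (\<forall>y a. y \<in> Z \<longleftrightarrow> \<beta> * y - real_of_int a \<in> Z)"

lemma inv_step: assumes "inv_set Z" "y \<in> space (seq_space A)"
  shows "phi \<beta> (case_nat a y) \<in> Z \<longleftrightarrow> phi \<beta> y \<in> Z"
proof -
  have "\<beta> * phi \<beta> (case_nat a y) - real_of_int a = phi \<beta> y"
    using phi_case_nat[OF assms(2)] beta by simp
  thus ?thesis using assms(1) unfolding inv_set_def by metis
qed

definition hZ :: "real set \<Rightarrow> 'v \<Rightarrow> real" where
  "hZ Z j = \<P>(\<omega> in SS. phi \<beta> (lbl j \<omega>) \<in> Z)"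

lemma PZ_sets: "Z \<in> sets borel \<Longrightarrow> {x \<in> space (seq_space A). phi \<beta> x \<in> Z} \<in> sets (seq_space A)"
  using measurable_sets[OF phi_measurable] by (simp add: vimage_def Int_def conj_commute)

lemma hZ_alt: "hZ Z j = \<P>(\<omega> in SS. lbl j \<omega> \<in> {x \<in> space (seq_space A). phi \<beta> x \<in> Z})"
  unfolding hZ_def using lbl_space by simp

lemma sets_phi_lbl: "Z \<in> sets borel \<Longrightarrow> {\<omega> \<in> space SS. phi \<beta> (lbl j \<omega>) \<in> Z} \<in> sets SS"
  using sets_lbl_pred[OF PZ_sets, of Z j] lbl_space by simp

lemma hZ_harm: assumes Z: "Z \<in> sets borel" "inv_set Z"
  shows "hZ Z j = (\<Sum>j'\<in>UNIV. Pr j j' * hZ Z j')"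
proof -
  have "hZ Z j = (\<Sum>j'\<in>UNIV. Pr j j' * \<P>(\<omega> in SS. case_nat (lab (j,j')) (lbl j' \<omega>) \<in> {x \<in> space (seq_space A). phi \<beta> x \<in> Z}))"
    unfolding hZ_alt by (rule step[OF PZ_sets[OF Z(1)]])
  also have "\<dots> = (\<Sum>j'\<in>UNIV. Pr j j' * hZ Z j')"
  proof (intro sum.cong refl)
    fix j'
    show "Pr j j' * \<P>(\<omega> in SS. case_nat (lab (j,j')) (lbl j' \<omega>) \<in> {x \<in> space (seq_space A). phi \<beta> x \<in> Z}) = Pr j j' * hZ Z j'"
    proof (cases "(j,j') \<in> E")
      case True
      hence "lab (j,j') \<in> A" using lab_in by auto
      hence "case_nat (lab (j,j')) (lbl j' \<omega>) \<in> {x \<in> space (seq_space A). phi \<beta> x \<in> Z} \<longleftrightarrow> phi \<beta> (lbl j' \<omega>) \<in> Z" for \<omega>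
        using lbl_space[of j' \<omega>] inv_step[OF Z(2) lbl_space]
        by (auto simp: space_seq split: nat.splits)
      thus ?thesis unfolding hZ_def by simp
    qed (simp add: Pr_def)
  qed
  finally show ?thesis .
qed

lemma hZ_const: assumes "Z \<in> sets borel" "inv_set Z" shows "hZ Z j = hZ Z j'"
  by (rule harmonic_const[of "hZ Z"]) (rule hZ_harm[OF assms])

lemma sets_SS: "sets SS = sets (stream_space (count_space UNIV))"
  by (rule sets_stream_space_cong) simp

lemma sstart_SS: "sstart UNIV t \<in> sets SS"
  unfolding sets_SS by (rule sets_sstart)

lemma sstart_indep:
  assumes Z: "Z \<in> sets borel" "inv_set Z"
  shows "\<P>(\<omega> in SS. \<omega> \<in> sstart UNIV t \<and> phi \<beta> (lbl j \<omega>) \<in> Z) = \<P>(\<omega> in SS. \<omega> \<in> sstart UNIV t) * hZ Z j"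
proof (induction t arbitrary: j)
  case Nil
  interpret S: prob_space SS by (rule prob_SS)
  show ?case by (simp add: hZ_def S.prob_space)
next
  case (Cons T t)
  interpret S: prob_space SS by (rule prob_SS)
  have PQ: "prob_space (measure_pmf Q)" by (rule prob_space_measure_pmf)
  have m1: "{\<omega> \<in> space SS. \<omega> \<in> sstart UNIV (T # t) \<and> phi \<beta> (lbl j \<omega>) \<in> Z} \<in> sets SS"
  proof -
    have "{\<omega> \<in> space SS. \<omega> \<in> sstart UNIV (T # t) \<and> phi \<beta> (lbl j \<omega>) \<in> Z} =
       sstart UNIV (T # t) \<inter> {\<omega> \<in> space SS. phi \<beta> (lbl j \<omega>) \<in> Z}" by auto
    thus ?thesis using sstart_SS sets_phi_lbl[OF Z(1)] by auto
  qed
  have m2: "{\<omega> \<in> space SS. \<omega> \<in> sstart UNIV (T # t)} \<in> sets SS"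
    using sstart_SS[of "T # t"] by (simp add: space_stream_space del: in_sstart)
  have "ennreal (\<P>(\<omega> in SS. \<omega> \<in> sstart UNIV (T # t) \<and> phi \<beta> (lbl j \<omega>) \<in> Z)) =
      (\<integral>\<^sup>+T'. ennreal (\<P>(\<omega> in SS. T' ## \<omega> \<in> sstart UNIV (T # t) \<and> phi \<beta> (lbl j (T' ## \<omega>)) \<in> Z)) \<partial>measure_pmf Q)"
    by (rule prob_space.prob_stream_space[OF PQ m1])
  also have "\<dots> = (\<integral>\<^sup>+T'. ennreal (\<P>(\<omega> in SS. \<omega> \<in> sstart UNIV t) * hZ Z j) * indicator {T} T' \<partial>measure_pmf Q)"
  proof (intro nn_integral_cong)
    fix T'
    show "ennreal (\<P>(\<omega> in SS. T' ## \<omega> \<in> sstart UNIV (T # t) \<and> phi \<beta> (lbl j (T' ## \<omega>)) \<in> Z)) =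
      ennreal (\<P>(\<omega> in SS. \<omega> \<in> sstart UNIV t) * hZ Z j) * indicator {T} T'"
    proof (cases "T' = T")
      case True
      have "(T' ## \<omega> \<in> sstart UNIV (T # t) \<and> phi \<beta> (lbl j (T' ## \<omega>)) \<in> Z) \<longleftrightarrow>
            (\<omega> \<in> sstart UNIV t \<and> phi \<beta> (lbl (nxt j T) \<omega>) \<in> Z)" for \<omega>
        using True inv_step[OF Z(2) lbl_space] by (simp add: lbl_Stream)
      hence "\<P>(\<omega> in SS. T' ## \<omega> \<in> sstart UNIV (T # t) \<and> phi \<beta> (lbl j (T' ## \<omega>)) \<in> Z) =
          \<P>(\<omega> in SS. \<omega> \<in> sstart UNIV t) * hZ Z (nxt j T)"
        using Cons.IH[of "nxt j T"] by simp
      thus ?thesis using True hZ_const[OF Z, of "nxt j T" j] by simp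
    qed simp
  qed
  also have "\<dots> = ennreal (\<P>(\<omega> in SS. \<omega> \<in> sstart UNIV t) * hZ Z j) * ennreal (pmf Q T)"
    by (subst nn_integral_cmult_indicator) (auto simp: emeasure_pmf_single)
  finally have L: "ennreal (\<P>(\<omega> in SS. \<omega> \<in> sstart UNIV (T # t) \<and> phi \<beta> (lbl j \<omega>) \<in> Z)) =
      ennreal (\<P>(\<omega> in SS. \<omega> \<in> sstart UNIV t) * hZ Z j) * ennreal (pmf Q T)" .
  have "ennreal (\<P>(\<omega> in SS. \<omega> \<in> sstart UNIV (T # t))) =
      (\<integral>\<^sup>+T'. ennreal (\<P>(\<omega> in SS. T' ## \<omega> \<in> sstart UNIV (T # t))) \<partial>measure_pmf Q)"
    by (rule prob_space.prob_stream_space[OF PQ m2])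
  also have "\<dots> = (\<integral>\<^sup>+T'. ennreal (\<P>(\<omega> in SS. \<omega> \<in> sstart UNIV t)) * indicator {T} T' \<partial>measure_pmf Q)"
    by (intro nn_integral_cong) (auto split: split_indicator)
  also have "\<dots> = ennreal (\<P>(\<omega> in SS. \<omega> \<in> sstart UNIV t)) * ennreal (pmf Q T)"
    by (subst nn_integral_cmult_indicator) (auto simp: emeasure_pmf_single)
  finally have R: "ennreal (\<P>(\<omega> in SS. \<omega> \<in> sstart UNIV (T # t))) =
      ennreal (\<P>(\<omega> in SS. \<omega> \<in> sstart UNIV t)) * ennreal (pmf Q T)" .
  have h0: "hZ Z j \<ge> 0" by (simp add: hZ_def)
  from L R h0 show ?case
    by (simp add: ennreal_mult[symmetric] ennreal_inj mult_nonneg_nonneg mult.commute mult.left_commute)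
qed

lemma zero_one':
  assumes Z: "Z \<in> sets borel" "inv_set Z" and nz: "hZ Z j \<noteq> 0"
  shows "hZ Z j = 1"
proof -
  interpret S: prob_space SS by (rule prob_SS)
  define Y where "Y = {\<omega> \<in> space SS. phi \<beta> (lbl j \<omega>) \<in> Z}"
  have Y: "Y \<in> sets SS" unfolding Y_def by (rule sets_phi_lbl[OF Z(1)])
  have hY: "hZ Z j = S.prob Y" unfolding Y_def hZ_def by simp
  have hpos: "hZ Z j > 0" using nz by (simp add: hZ_def order_le_neq_trans)
  have eY: "emeasure SS Y = ennreal (hZ Z j)" using hY by (simp add: S.emeasure_eq_measure)
  define M where "M = uniform_measure SS Y"
  have sets_M: "sets M = sets SS" unfolding M_def by simp
  have "M = SS"
  proof (rule stream_space_eq_sstart[of UNIV])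
    show "countable (UNIV :: ('v \<Rightarrow> 'v) set)" by simp
    show "prob_space M" unfolding M_def
      by (rule prob_space_uniform_measure) (use eY hpos in auto)
    show "prob_space SS" by (rule prob_SS)
    show "AE x in M. x \<in> streams UNIV" "AE x in SS. x \<in> streams UNIV" by simp_all
    show "sets M = sets (stream_space (count_space UNIV))" using sets_M sets_SS by simp
    show "sets SS = sets (stream_space (count_space UNIV))" by (rule sets_SS)
    fix xs :: "('v \<Rightarrow> 'v) list"
    have "Y \<inter> sstart UNIV xs = {\<omega> \<in> space SS. \<omega> \<in> sstart UNIV xs \<and> phi \<beta> (lbl j \<omega>) \<in> Z}"
      by (auto simp: Y_def)
    hence "S.prob (Y \<inter> sstart UNIV xs) = S.prob (sstart UNIV xs) * hZ Z j"
      using sstart_indep[OF Z, of xs j] by (simp add: space_stream_space del: in_sstart)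
    hence "emeasure M (sstart UNIV xs) = ennreal (S.prob (sstart UNIV xs) * hZ Z j) / ennreal (hZ Z j)"
      unfolding M_def using Y sstart_SS eY by (simp add: S.emeasure_eq_measure)
    also have "\<dots> = ennreal (S.prob (sstart UNIV xs))"
      using hpos by (subst divide_ennreal) auto
    finally show "emeasure M (sstart UNIV xs) = emeasure SS (sstart UNIV xs)"
      by (simp add: S.emeasure_eq_measure)
  qed
  hence "emeasure SS (space SS - Y) = emeasure M (space SS - Y)" by simp
  also have "\<dots> = 0" unfolding M_def using Y by (subst emeasure_uniform_measure) auto
  finally have "S.prob (space SS - Y) = 0" by (simp add: S.emeasure_eq_measure)
  hence "S.prob Y = 1" using S.prob_compl[OF Y] by simp
  thus "hZ Z j = 1" using hY by simp
qed

lemma zero_one: "Z \<in> sets borel \<Longrightarrow> inv_set Z \<Longrightarrow> hZ Z j = 0 \<or> hZ Z j = 1"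
  using zero_one' by blast

definition RR :: "real set" where
  "RR = range (\<lambda>l::(int \<times> int) list. sum_list (map (\<lambda>(c,e). real_of_int c * \<beta> powi e) l))"

lemma RR_0: "0 \<in> RR" unfolding RR_def by (rule range_eqI[where x="[]"]) simp

lemma RR_add: "r \<in> RR \<Longrightarrow> r + real_of_int c * \<beta> powi e \<in> RR"
proof -
  assume "r \<in> RR"
  then obtain l where l: "r = sum_list (map (\<lambda>(c,e). real_of_int c * \<beta> powi e) l)" by (auto simp: RR_def)
  show ?thesis unfolding RR_def by (rule range_eqI[where x="(c,e) # l"]) (simp add: l)
qed

lemma countable_RR: "countable RR" unfolding RR_def by simp

definition clos :: "real set \<Rightarrow> real set" where
  "clos N = {y. \<exists>k::int. \<exists>r\<in>RR. \<beta> powi k * y + r \<in> N}"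

lemma beta_nz: "\<beta> \<noteq> 0" using beta by simp

lemma clos_sub: "N \<subseteq> clos N"
proof
  fix y assume "y \<in> N"
  thus "y \<in> clos N" unfolding clos_def
    by (intro CollectI exI[of _ 0] bexI[OF _ RR_0]) simp
qed

lemma inv_clos: "inv_set (clos N)"
  unfolding inv_set_def
proof (intro allI iffI)
  fix y a
  assume "y \<in> clos N"
  then obtain k r where kr: "r \<in> RR" "\<beta> powi k * y + r \<in> N" by (auto simp: clos_def)
  have eq: "\<beta> powi (k - 1) * (\<beta> * y - real_of_int a) + (r + real_of_int a * \<beta> powi (k - 1)) = \<beta> powi k * y + r"
    using beta_nz by (simp add: power_int_diff algebra_simps)
  show "\<beta> * y - real_of_int a \<in> clos N" unfolding clos_def
    by (intro CollectI exI[of _ "k - 1"] bexI[OF _ RR_add[OF kr(1), of a "k - 1"]]) (unfold eq, rule kr(2))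
next
  fix y a
  assume "\<beta> * y - real_of_int a \<in> clos N"
  then obtain k r where kr: "r \<in> RR" "\<beta> powi k * (\<beta> * y - real_of_int a) + r \<in> N" by (auto simp: clos_def)
  have eq: "\<beta> powi (k + 1) * y + (r + real_of_int (- a) * \<beta> powi k) = \<beta> powi k * (\<beta> * y - real_of_int a) + r"
    using beta_nz by (simp add: power_int_add algebra_simps)
  show "y \<in> clos N" unfolding clos_def
    by (intro CollectI exI[of _ "k + 1"] bexI[OF _ RR_add[OF kr(1), of "- a" k]]) (unfold eq, rule kr(2))
qed

lemma clos_eq: "clos N = (\<Union>(k,r)\<in>UNIV \<times> RR. (\<lambda>y. \<beta> powi k * y + r) -` N)"
  unfolding clos_def by auto

lemma countable_clos: "countable N \<Longrightarrow> countable (clos N)"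
proof -
  assume N: "countable N"
  have "clos N \<subseteq> (\<lambda>(k,r,z). (z - r) / \<beta> powi k) ` (UNIV \<times> RR \<times> N)"
  proof
    fix y assume "y \<in> clos N"
    then obtain k r where kr: "r \<in> RR" "\<beta> powi k * y + r \<in> N" by (auto simp: clos_def)
    have "y = ((\<beta> powi k * y + r) - r) / \<beta> powi k" using beta_nz by simp
    thus "y \<in> (\<lambda>(k,r,z). (z - r) / \<beta> powi k) ` (UNIV \<times> RR \<times> N)"
      using kr by (intro image_eqI[of _ _ "(k, r, \<beta> powi k * y + r)"]) auto
  qed
  moreover have "countable ((\<lambda>(k,r,z). (z - r) / \<beta> powi k) ` (UNIV \<times> RR \<times> N))"
    using N countable_RR by auto
  ultimately show ?thesis by (rule countable_subset)
qed

lemma borel_clos: "N \<in> sets borel \<Longrightarrow> clos N \<in> sets borel"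
  unfolding clos_eq
proof (rule sets.countable_UN'')
  assume N: "N \<in> sets borel"
  show "countable ((UNIV::int set) \<times> RR)" by (rule countable_SIGMA) (auto intro: countable_RR countableI_type)
  fix i :: "int \<times> real" assume "i \<in> UNIV \<times> RR"
  obtain k r where i: "i = (k, r)" by force
  have "(\<lambda>y. \<beta> powi k * y + r) \<in> borel_measurable borel" by simp
  from measurable_sets[OF this N] show "(case i of (k, r) \<Rightarrow> (\<lambda>y. \<beta> powi k * y + r) -` N) \<in> sets borel"
    by (simp add: i)
qed

lemma null_affine:
  fixes c t :: real
  assumes N: "N \<in> null_sets lborel" and c: "c \<noteq> 0"
  shows "(\<lambda>y. c * y + t) -` N \<in> null_sets lborel"
proof -
  have Nb: "N \<in> sets borel" using N by (auto simp: null_sets_def)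
  have pre: "(\<lambda>y. c * y + t) -` N \<in> sets borel"
    using measurable_sets[OF _ Nb, of "\<lambda>y. c * y + t" borel] by simp
  have "(\<integral>\<^sup>+x. indicator N x \<partial>lborel) = ennreal \<bar>c\<bar> * (\<integral>\<^sup>+x. indicator N (t + c * x) \<partial>lborel)"
    by (rule nn_integral_real_affine[OF _ c]) (rule borel_measurable_indicator[OF Nb])
  also have "(\<lambda>x. indicator N (t + c * x) :: ennreal) = indicator ((\<lambda>y. c * y + t) -` N)"
    by (auto simp: indicator_def add.commute)
  finally have "emeasure lborel N = ennreal \<bar>c\<bar> * emeasure lborel ((\<lambda>y. c * y + t) -` N)"
    using Nb pre by simp
  hence "emeasure lborel ((\<lambda>y. c * y + t) -` N) = 0" using N c by (simp add: null_sets_def)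
  thus ?thesis using pre by (simp add: null_sets_def)
qed

lemma null_clos: "N \<in> null_sets lborel \<Longrightarrow> clos N \<in> null_sets lborel"
  unfolding clos_eq
proof (rule null_sets_UN')
  assume N: "N \<in> null_sets lborel"
  show "countable ((UNIV::int set) \<times> RR)" by (rule countable_SIGMA) (auto intro: countable_RR countableI_type)
  fix i :: "int \<times> real" assume "i \<in> UNIV \<times> RR"
  obtain k r where i: "i = (k, r)" by force
  have "\<beta> powi k \<noteq> 0" using beta_nz by simp
  from null_affine[OF N this, of r] show "(case i of (k, r) \<Rightarrow> (\<lambda>y. \<beta> powi k * y + r) -` N) \<in> null_sets lborel"
    by (simp add: i)
qed

lemma path_phi:
  assumes fin: "finite Mx"
    and clo: "\<And>j x j'. (j,x) \<in> Mx \<Longrightarrow> (j,j') \<in> E \<Longrightarrow> (j', \<beta> * x - real_of_int (lab (j,j'))) \<in> Mx"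
    and p: "\<And>n. (p n, p (Suc n)) \<in> E" and start: "(p 0, x) \<in> Mx"
  shows "phi \<beta> (\<lambda>n. lab (p n, p (Suc n))) = x"
proof -
  define l where "l n = lab (p n, p (Suc n))" for n
  define xs where "xs = rec_nat x (\<lambda>n y. \<beta> * y - real_of_int (l n))"
  have xs0: "xs 0 = x" and xsS: "xs (Suc n) = \<beta> * xs n - real_of_int (l n)" for n
    by (simp_all add: xs_def)
  have inM: "(p n, xs n) \<in> Mx" for n
    by (induction n) (auto simp: xs0 xsS start l_def intro: clo p)
  define Bx where "Bx = Max ((\<lambda>z. \<bar>snd z\<bar>) ` Mx)"
  have bnd: "\<bar>xs n\<bar> \<le> Bx" for n
  proof -
    have "\<bar>xs n\<bar> \<in> (\<lambda>z. \<bar>snd z\<bar>) ` Mx" using inM[of n] by (rule rev_image_eqI) simp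
    thus ?thesis unfolding Bx_def using fin by (intro Max_ge) auto
  qed
  have ps: "x = (\<Sum>k<n. real_of_int (l k) / \<beta> ^ Suc k) + xs n / \<beta> ^ n" for n
  proof (induction n)
    case 0 then show ?case by (simp add: xs0)
  next
    case (Suc n)
    have "xs (Suc n) / \<beta> ^ Suc n = xs n / \<beta> ^ n - real_of_int (l n) / \<beta> ^ Suc n"
      using beta_nz by (simp add: xsS field_simps)
    with Suc show ?case by simp
  qed
  have lsp: "l \<in> space (seq_space A)" using lab_in p by (auto simp: space_seq l_def)
  have "(\<lambda>n. \<Sum>k<n. real_of_int (l k) / \<beta> ^ Suc k) \<longlonglongrightarrow> phi \<beta> l"
    unfolding phi_def by (rule summable_LIMSEQ[OF phi_summable[OF lsp]])
  moreover have "(\<lambda>n. xs n / \<beta> ^ n) \<longlonglongrightarrow> 0"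
  proof (rule Lim_null_comparison)
    show "\<forall>\<^sub>F n in sequentially. norm (xs n / \<beta> ^ n) \<le> Bx * inverse \<beta> ^ n"
      using bnd beta by (intro always_eventually allI) (simp add: abs_divide divide_right_mono power_inverse divide_inverse_commute[symmetric] field_simps)
    have "norm (inverse \<beta>) < 1" using beta by (simp add: inverse_less_1_iff)
    thus "(\<lambda>n. Bx * inverse \<beta> ^ n) \<longlonglongrightarrow> 0"
      using tendsto_mult_right_zero[OF LIMSEQ_power_zero] by blast
  qed
  hence "(\<lambda>n. (\<Sum>k<n. real_of_int (l k) / \<beta> ^ Suc k)) \<longlonglongrightarrow> x"
  proof -
    assume "(\<lambda>n. xs n / \<beta> ^ n) \<longlonglongrightarrow> 0"
    hence "(\<lambda>n. x - xs n / \<beta> ^ n) \<longlonglongrightarrow> x - 0" by (intro tendsto_intros)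
    moreover have "(\<lambda>n. x - xs n / \<beta> ^ n) = (\<lambda>n. (\<Sum>k<n. real_of_int (l k) / \<beta> ^ Suc k))"
      using ps by (auto simp: algebra_simps)
    ultimately show ?thesis by simp
  qed
  ultimately have "phi \<beta> l = x" by (rule LIMSEQ_unique)
  thus ?thesis by (simp add: l_def[abs_def])
qed

lemma finite_big_atoms:
  fixes D :: "real measure"
  assumes D: "prob_space D" "sets D = sets borel" and e: "\<epsilon> > 0"
  shows "finite {x. measure D {x} \<ge> \<epsilon>}"
proof (rule ccontr)
  interpret D: prob_space D by (rule D(1))
  assume inf: "infinite {x. measure D {x} \<ge> \<epsilon>}"
  obtain n :: nat where n: "real n * \<epsilon> > 1"
    using reals_Archimedean3[OF e] by blast
  obtain F where F: "finite F" "card F = n" "F \<subseteq> {x. measure D {x} \<ge> \<epsilon>}"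
    using infinite_arbitrarily_large[OF inf] by blast
  have sing: "{x} \<in> sets D" for x using D(2) by simp
  have "measure D F = (\<Sum>x\<in>F. measure D {x})"
    by (rule measure_eq_sum_singleton[OF F(1) sing]) (simp add: D.emeasure_eq_measure)
  also have "\<dots> \<ge> (\<Sum>x\<in>F. \<epsilon>)" using F(3) by (intro sum_mono) auto
  finally have "measure D F \<ge> real n * \<epsilon>" using F(2) by simp
  moreover have "measure D F \<le> 1" by (rule D.prob_le_1)
  ultimately show False using n by simp
qed

definition gg :: "'v \<Rightarrow> real \<Rightarrow> real" where
  "gg j x = \<P>(\<omega> in SS. phi \<beta> (lbl j \<omega>) = x)"

lemma gg_rec: "gg j x = (\<Sum>j'\<in>UNIV. Pr j j' * gg j' (\<beta> * x - real_of_int (lab (j,j'))))"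
proof -
  have "gg j x = hZ {x} j" by (simp add: gg_def hZ_def)
  also have "\<dots> = (\<Sum>j'\<in>UNIV. Pr j j' * \<P>(\<omega> in SS. case_nat (lab (j,j')) (lbl j' \<omega>) \<in> {y \<in> space (seq_space A). phi \<beta> y \<in> {x}}))"
    unfolding hZ_alt by (rule step[OF PZ_sets]) simp
  also have "\<dots> = (\<Sum>j'\<in>UNIV. Pr j j' * gg j' (\<beta> * x - real_of_int (lab (j,j'))))"
  proof (intro sum.cong refl)
    fix j'
    show "Pr j j' * \<P>(\<omega> in SS. case_nat (lab (j,j')) (lbl j' \<omega>) \<in> {y \<in> space (seq_space A). phi \<beta> y \<in> {x}}) =
      Pr j j' * gg j' (\<beta> * x - real_of_int (lab (j,j')))"
    proof (cases "(j,j') \<in> E")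
      case True
      hence "lab (j,j') \<in> A" using lab_in by auto
      hence "case_nat (lab (j,j')) (lbl j' \<omega>) \<in> {y \<in> space (seq_space A). phi \<beta> y \<in> {x}} \<longleftrightarrow>
          phi \<beta> (lbl j' \<omega>) = \<beta> * x - real_of_int (lab (j,j'))" for \<omega>
        using lbl_space[of j' \<omega>] phi_case_nat[OF lbl_space, of "lab (j,j')" j' \<omega>] beta_nz
        by (auto simp: space_seq field_simps split: nat.splits)
      thus ?thesis unfolding gg_def by simp
    qed (simp add: Pr_def)
  qed
  finally show ?thesis .
qed

lemma gg_finite: "\<epsilon> > 0 \<Longrightarrow> finite {x. gg j x \<ge> \<epsilon>}"
proof -
  assume e: "\<epsilon> > 0"
  interpret S: prob_space SS by (rule prob_SS)
  let ?f = "\<lambda>\<omega>. phi \<beta> (lbl j \<omega>)"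
  have fm: "?f \<in> borel_measurable SS"
    by (rule measurable_compose[OF measurable_lbl phi_measurable])
  have "gg j x = measure (distr SS borel ?f) {x}" for x
    unfolding gg_def by (subst measure_distr[OF fm]) (auto intro!: arg_cong[where f="measure SS"])
  moreover have "finite {x. measure (distr SS borel ?f) {x} \<ge> \<epsilon>}"
    by (rule finite_big_atoms[OF S.prob_space_distr[OF fm] _ e]) simp
  ultimately show ?thesis by simp
qed

lemma atomic_const:
  assumes pos: "gg j0 x0 > 0"
  shows "\<exists>c. \<forall>i. \<forall>l\<in>label_seqs E lab {i}. phi \<beta> l = c i"
proof -
  define \<epsilon> where "\<epsilon> = gg j0 x0"
  define S0 where "S0 = (\<Union>j. {j} \<times> {x. gg j x \<ge> \<epsilon>})"
  have finS0: "finite S0" unfolding S0_def using gg_finite pos by (auto simp: \<epsilon>_def)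
  have inS0: "(j0, x0) \<in> S0" by (simp add: S0_def \<epsilon>_def)
  define m where "m = Max ((\<lambda>(j,x). gg j x) ` S0)"
  have m_ge: "gg j x \<le> m" if "(j,x) \<in> S0" for j x
    unfolding m_def using finS0 that by (intro Max_ge) (auto intro: rev_image_eqI)
  have eps_m: "\<epsilon> \<le> m" using m_ge[OF inS0] by (simp add: \<epsilon>_def)
  have le: "gg j x \<le> m" for j x
  proof (cases "gg j x \<ge> \<epsilon>")
    case True then show ?thesis by (intro m_ge) (simp add: S0_def)
  next
    case False then show ?thesis using eps_m by simp
  qed
  define Mx where "Mx = {(j,x). gg j x = m}"
  have "Mx \<subseteq> S0" using eps_m by (auto simp: Mx_def S0_def)
  hence finM: "finite Mx" using finS0 by (rule finite_subset)
  have "m \<in> (\<lambda>(j,x). gg j x) ` S0" unfolding m_def using finS0 inS0 by (intro Max_in) auto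
  then obtain j1 x1 where j1: "(j1, x1) \<in> Mx" by (auto simp: Mx_def)
  have clo: "(j', \<beta> * x - real_of_int (lab (j,j'))) \<in> Mx" if "(j,x) \<in> Mx" "(j,j') \<in> E" for j x j'
  proof -
    have "m = (\<Sum>j'\<in>UNIV. Pr j j' * (\<lambda>j'. gg j' (\<beta> * x - real_of_int (lab (j,j')))) j')"
      using that(1) gg_rec[of j x] by (simp add: Mx_def)
    from max_closed[OF _ this that(2)] le show ?thesis by (simp add: Mx_def)
  qed
  have ex: "\<exists>y. (i, y) \<in> Mx" for i
  proof -
    have "(j1, i) \<in> E\<^sup>*" by (rule reach)
    thus ?thesis
    proof (induction rule: rtrancl_induct)
      case base then show ?case using j1 by blast
    next
      case (step y z)
      then obtain w where "(y, w) \<in> Mx" by blast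
      thus ?case using clo step(2) by blast
    qed
  qed
  define c where "c i = (SOME y. (i, y) \<in> Mx)" for i
  have c: "(i, c i) \<in> Mx" for i unfolding c_def using ex[of i] by (rule someI_ex)
  have "phi \<beta> l = c i" if "l \<in> label_seqs E lab {i}" for i l
  proof -
    from that obtain p where p: "p 0 = i" "\<And>n. (p n, p (Suc n)) \<in> E" "\<And>n. l n = lab (p n, p (Suc n))"
      by (auto simp: label_seqs_def)
    have eq: "l = (\<lambda>n. lab (p n, p (Suc n)))" using p(3) by auto
    have "phi \<beta> (\<lambda>n. lab (p n, p (Suc n))) = c i"
      by (rule path_phi[where p=p, OF finM clo p(2)]) (auto simp: p(1) c)
    thus ?thesis using eq by simp
  qed
  thus ?thesis by blast
qed

lemma final_generic:
  fixes \<rho> :: "(nat \<Rightarrow> int) measure" and w :: "'v \<Rightarrow> real"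
  assumes sets: "sets \<rho> = sets (seq_space A)" and wnn: "\<forall>j. w j \<ge> 0" and wsum: "(\<Sum>j\<in>UNIV. w j) = 1"
  and cyl: "\<forall>eps. set eps \<subseteq> A \<longrightarrow> emeasure \<rho> (cylinder A eps) = ennreal (\<Sum>j\<in>UNIV. w j *
      (inverse (lam ^ length eps) * (mat_list_prod (map (label_matrix E lab) eps) *v vR) $ j / vR $ j))"
  defines "\<nu> \<equiv> distr \<rho> borel (phi \<beta>)"
  shows "pure_measure \<nu> \<and> (purely_atomic \<nu> \<longrightarrow> finite (phi \<beta> ` label_seqs E lab UNIV) \<and>
              finite (atoms \<nu>) \<and> card (atoms \<nu>) \<le> CARD('v))"
proof -
  interpret S: prob_space SS by (rule prob_SS)
  have sp: "space \<rho> = space (seq_space A)" by (rule sets_eq_imp_space_eq[OF sets])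
  have phim: "phi \<beta> \<in> measurable \<rho> borel"
    unfolding measurable_cong_sets[OF sets refl] by (rule phi_measurable)
  have sets_nu: "sets \<nu> = sets borel" by (simp add: \<nu>_def)
  have space_nu: "space \<nu> = UNIV" by (simp add: \<nu>_def)
  have nu_eq: "emeasure \<nu> Z = ennreal (\<Sum>j\<in>UNIV. w j * hZ Z j)" if Z: "Z \<in> sets borel" for Z
  proof -
    have "emeasure \<nu> Z = emeasure \<rho> (phi \<beta> -` Z \<inter> space \<rho>)"
      unfolding \<nu>_def by (rule emeasure_distr[OF phim Z])
    also have "phi \<beta> -` Z \<inter> space \<rho> = {x \<in> space (seq_space A). phi \<beta> x \<in> Z}" using sp by auto
    also have "emeasure \<rho> \<dots> = ennreal (\<Sum>j\<in>UNIV. w j * hZ Z j)"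
      unfolding hZ_alt by (rule mix_eq[OF sets wnn wsum cyl PZ_sets[OF Z]])
    finally show ?thesis .
  qed
  have hZ_UNIV: "hZ UNIV j = 1" for j by (simp add: hZ_def S.prob_space)
  have "emeasure \<nu> (space \<nu>) = 1" using nu_eq[of UNIV] by (simp add: space_nu hZ_UNIV wsum)
  hence P: "prob_space \<nu>" by (rule prob_spaceI)
  interpret P: prob_space \<nu> by (rule P)
  have dich: "emeasure \<nu> (UNIV - Z) = 0" if Z: "Z \<in> sets borel" "inv_set Z" "emeasure \<nu> Z > 0" for Z
  proof -
    obtain j0 :: 'v where True by blast
    have hc: "hZ Z j = hZ Z j0" for j by (rule hZ_const[OF Z(1,2)])
    have "(\<Sum>j\<in>UNIV. w j * hZ Z j) = (\<Sum>j\<in>UNIV. w j * hZ Z j0)"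
      by (rule sum.cong[OF refl]) (metis hc)
    also have "\<dots> = hZ Z j0" by (simp only: sum_distrib_right[symmetric] wsum mult_1)
    finally have "(\<Sum>j\<in>UNIV. w j * hZ Z j) = hZ Z j0" .
    hence eq: "emeasure \<nu> Z = ennreal (hZ Z j0)" using nu_eq[OF Z(1)] by simp
    have "hZ Z j0 \<noteq> 0" using Z(3) eq by auto
    hence "hZ Z j0 = 1" using zero_one[OF Z(1,2)] by blast
    hence "emeasure \<nu> Z = 1" using eq by simp
    moreover have "Z \<in> sets \<nu>" using Z(1) sets_nu by simp
    ultimately show ?thesis using emeasure_compl[of Z \<nu>] space_nu P.emeasure_space_1 by simp
  qed
  have gg_hZ: "hZ {y} j = gg j y" for y j by (simp add: hZ_def gg_def)
  have pure: "pure_measure \<nu>"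
  proof (cases "\<exists>x. emeasure \<nu> {x} > 0")
    case True
    then obtain x where x: "emeasure \<nu> {x} > 0" by blast
    define Z where "Z = clos {x}"
    have Zb: "Z \<in> sets borel" unfolding Z_def by (rule borel_clos) simp
    have "emeasure \<nu> {x} \<le> emeasure \<nu> Z"
      using clos_sub[of "{x}"] Zb sets_nu by (intro emeasure_mono) (auto simp: Z_def)
    hence "emeasure \<nu> Z > 0" using x by simp
    hence "emeasure \<nu> (UNIV - Z) = 0" using dich Zb inv_clos Z_def by blast
    moreover have "countable Z" unfolding Z_def by (rule countable_clos) simp
    ultimately have "purely_atomic \<nu>" unfolding purely_atomic_def using space_nu by auto
    thus ?thesis by (simp add: pure_measure_def)
  next
    case False
    hence noatom: "\<forall>x. emeasure \<nu> {x} = 0" by (simp add: not_less)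
    show ?thesis
    proof (cases "abs_continuous \<nu>")
      case False
      then obtain N where N: "N \<in> null_sets lborel" "N \<notin> null_sets \<nu>"
        unfolding abs_continuous_def absolutely_continuous_def by blast
      have Nb: "N \<in> sets borel" using N(1) by (auto simp: null_sets_def)
      hence "emeasure \<nu> N > 0" using N(2) sets_nu by (auto simp: null_sets_def zero_less_iff_neq_zero)
      define Z where "Z = clos N"
      have Zb: "Z \<in> sets borel" unfolding Z_def by (rule borel_clos[OF Nb])
      have "emeasure \<nu> N \<le> emeasure \<nu> Z"
        using clos_sub[of N] Zb sets_nu by (intro emeasure_mono) (auto simp: Z_def)
      hence "emeasure \<nu> Z > 0" using \<open>emeasure \<nu> N > 0\<close> by simp
      hence "emeasure \<nu> (UNIV - Z) = 0" using dich Zb inv_clos Z_def by blast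
      moreover have "emeasure lborel Z = 0" using null_clos[OF N(1)] by (simp add: Z_def null_sets_def)
      ultimately have "purely_singular_continuous \<nu>"
        unfolding purely_singular_continuous_def using noatom Zb space_nu by auto
      thus ?thesis by (simp add: pure_measure_def)
    qed (simp add: pure_measure_def)
  qed
  have atomic: "finite (phi \<beta> ` label_seqs E lab UNIV) \<and> finite (atoms \<nu>) \<and> card (atoms \<nu>) \<le> CARD('v)"
    if pa: "purely_atomic \<nu>"
  proof -
    from pa obtain S where S: "countable S" "emeasure \<nu> (UNIV - S) = 0"
      unfolding purely_atomic_def using space_nu by auto
    have "\<exists>x. emeasure \<nu> {x} > 0"
    proof (rule ccontr)
      assume "\<not> ?thesis"
      hence "\<forall>x. {x} \<in> null_sets \<nu>" using sets_nu by (auto simp: null_sets_def not_less)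
      hence "(\<Union>x\<in>S. {x}) \<in> null_sets \<nu>" by (intro null_sets_UN'[OF S(1)]) auto
      hence "S \<in> null_sets \<nu>" by simp
      moreover have "UNIV - S \<in> null_sets \<nu>"
        using S(2) sets_nu sets.countable[of S borel] S(1) by (auto simp: null_sets_def)
      ultimately have "S \<union> (UNIV - S) \<in> null_sets \<nu>" by (rule null_sets.Un)
      hence "emeasure \<nu> (space \<nu>) = 0" using space_nu by (simp add: null_sets_def)
      thus False by (simp add: P.emeasure_space_1)
    qed
    then obtain x where x: "emeasure \<nu> {x} > 0" by blast
    have ex_pos: "\<exists>j. gg j y > 0" if "emeasure \<nu> {y} > 0" for y
    proof -
      have "(\<Sum>j\<in>UNIV. w j * gg j y) > 0" using that nu_eq[of "{y}"] by (simp add: gg_hZ)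
      then obtain j where "w j * gg j y > 0" using sum_pos_ex by blast
      moreover have "gg j y \<ge> 0" by (simp add: gg_def)
      ultimately show ?thesis using wnn by (auto intro!: exI[of _ j] simp: zero_less_mult_iff)
    qed
    obtain j0 where "gg j0 x > 0" using ex_pos[OF x] by blast
    then obtain c where c: "\<And>i l. l \<in> label_seqs E lab {i} \<Longrightarrow> phi \<beta> l = c i"
      using atomic_const by blast
    have img: "phi \<beta> ` label_seqs E lab UNIV \<subseteq> range c"
    proof
      fix y assume "y \<in> phi \<beta> ` label_seqs E lab UNIV"
      then obtain l where l: "l \<in> label_seqs E lab UNIV" "y = phi \<beta> l" by blast
      then obtain p where p: "\<forall>n. (p n, p (Suc n)) \<in> E \<and> l n = lab (p n, p (Suc n))"
        by (auto simp: label_seqs_def)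
      hence "l \<in> label_seqs E lab {p 0}" by (auto simp: label_seqs_def)
      thus "y \<in> range c" using c l(2) by blast
    qed
    have at: "atoms \<nu> \<subseteq> range c"
    proof
      fix y assume "y \<in> atoms \<nu>"
      hence "emeasure \<nu> {y} > 0" by (simp add: atoms_def)
      then obtain j where j: "gg j y > 0" using ex_pos by blast
      have "phi \<beta> (lbl j \<omega>) = c j" for \<omega> by (rule c[OF lbl_label_seqs])
      hence "y = c j" using j by (cases "y = c j") (auto simp: gg_def)
      thus "y \<in> range c" by blast
    qed
    have "finite (range c)" by simp
    moreover have "card (range c) \<le> CARD('v)" by (rule card_image_le) simp
    ultimately show ?thesis using img at finite_subset card_mono by (metis le_trans)
  qed
  show ?thesis using pure atomic by blast
qed

end

theorem theorem1:
  fixes A :: "int set" and E :: "('v::finite \<times> 'v) set" and lab :: "'v \<times> 'v \<Rightarrow> int"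
    and I :: "'v set" and \<beta> :: real and lam :: real and vL vR :: "real^'v"
    and \<mu> \<mu>I :: "(nat \<Rightarrow> int) measure"
  defines "M \<equiv> (\<Sum>a\<in>A. label_matrix E lab a)"
  defines "vI \<equiv> (\<chi> i. if i \<in> I then 1 else 0) :: real^'v"
  assumes finA: "finite A"
    and lab_in: "\<forall>e\<in>E. lab e \<in> A"
    and I_ne: "I \<noteq> {}"
    and prim: "primitive_matrix M"
    and pis: "pisot \<beta>"
    and lam_pos: "lam > 0"
    and vL_pos: "\<forall>i. vL $ i > 0" and vR_pos: "\<forall>i. vR $ i > 0"
    and vL_eig: "vL v* M = lam *\<^sub>R vL" and vR_eig: "M *v vR = lam *\<^sub>R vR"
    and norm: "vL \<bullet> vR = 1"
    and \<mu>_sets: "sets \<mu> = sets (seq_space A)"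
    and \<mu>_cyl: "\<forall>eps. set eps \<subseteq> A \<longrightarrow> emeasure \<mu> (cylinder A eps) =
        ennreal (lam powi (- int (length eps)) *
                 (vL \<bullet> (mat_list_prod (map (label_matrix E lab) eps) *v vR)))"
    and \<mu>I_sets: "sets \<mu>I = sets (seq_space A)"
    and \<mu>I_cyl: "\<forall>eps. set eps \<subseteq> A \<longrightarrow> emeasure \<mu>I (cylinder A eps) =
        ennreal (lam powi (- int (length eps)) *
                 (vI \<bullet> (mat_list_prod (map (label_matrix E lab) eps) *v vR)) / (vI \<bullet> vR))"
  shows "\<forall>\<nu> \<in> {distr \<mu> borel (phi \<beta>), distr \<mu>I borel (phi \<beta>)}.
           pure_measure \<nu> \<and>
           (purely_atomic \<nu> \<longrightarrow> finite (phi \<beta> ` label_seqs E lab UNIV) \<and>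
              finite (atoms \<nu>) \<and> card (atoms \<nu>) \<le> CARD('v))"
proof -
  have beta: "\<beta> > 1" using pis by (simp add: pisot_def)
  interpret gd A E lab vR lam \<beta>
    using finA lab_in lam_pos vR_pos vR_eig prim beta unfolding M_def by unfold_locales auto
  have pw: "lam powi (- int k) = inverse (lam ^ k)" for k by (simp add: power_int_minus)
  have wL: "\<forall>j. vL $ j * vR $ j \<ge> 0" using vL_pos vR_pos by (auto intro: less_imp_le)
  have sL: "(\<Sum>j\<in>UNIV. vL $ j * vR $ j) = 1" using norm by (simp add: inner_vec_def)
  have cL: "\<forall>eps. set eps \<subseteq> A \<longrightarrow> emeasure \<mu> (cylinder A eps) = ennreal (\<Sum>j\<in>UNIV. vL $ j * vR $ j *
      (inverse (lam ^ length eps) * (mat_list_prod (map (label_matrix E lab) eps) *v vR) $ j / vR $ j))"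
  proof (intro allI impI)
    fix eps :: "int list" assume "set eps \<subseteq> A"
    hence e: "emeasure \<mu> (cylinder A eps) = ennreal (lam powi (- int (length eps)) *
                 (vL \<bullet> (mat_list_prod (map (label_matrix E lab) eps) *v vR)))" using \<mu>_cyl by blast
    let ?u = "mat_list_prod (map (label_matrix E lab) eps) *v vR"
    have "lam powi (- int (length eps)) * (vL \<bullet> ?u) =
        (\<Sum>j\<in>UNIV. vL $ j * vR $ j * (inverse (lam ^ length eps) * ?u $ j / vR $ j))"
      by (simp add: pw inner_vec_def sum_distrib_left algebra_simps)
    thus "emeasure \<mu> (cylinder A eps) = ennreal (\<Sum>j\<in>UNIV. vL $ j * vR $ j *
      (inverse (lam ^ length eps) * ?u $ j / vR $ j))" using e by simp
  qed
  note R1 = final_generic[OF \<mu>_sets wL sL cL]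
  define D where "D = vI \<bullet> vR"
  have D_eq: "D = (\<Sum>j\<in>UNIV. if j \<in> I then vR $ j else 0)"
    unfolding D_def vI_def inner_vec_def by (rule sum.cong) auto
  have D_pos: "D > 0"
  proof -
    obtain i where "i \<in> I" using I_ne by blast
    have "D \<ge> (if i \<in> I then vR $ i else 0)" unfolding D_eq
      by (rule member_le_sum) (auto intro: less_imp_le)
    hence "D \<ge> vR $ i" using \<open>i \<in> I\<close> by simp
    moreover have "vR $ i > 0" using vR_pos by blast
    ultimately show ?thesis by linarith
  qed
  define wI where "wI j = (if j \<in> I then vR $ j else 0) / D" for j
  have wI: "\<forall>j. wI j \<ge> 0" using D_pos by (auto simp: wI_def intro: less_imp_le)
  have sI: "(\<Sum>j\<in>UNIV. wI j) = 1" using D_pos by (simp add: wI_def sum_divide_distrib[symmetric] D_eq[symmetric])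
  have cI: "\<forall>eps. set eps \<subseteq> A \<longrightarrow> emeasure \<mu>I (cylinder A eps) = ennreal (\<Sum>j\<in>UNIV. wI j *
      (inverse (lam ^ length eps) * (mat_list_prod (map (label_matrix E lab) eps) *v vR) $ j / vR $ j))"
  proof (intro allI impI)
    fix eps :: "int list" assume "set eps \<subseteq> A"
    hence e: "emeasure \<mu>I (cylinder A eps) = ennreal (lam powi (- int (length eps)) *
                 (vI \<bullet> (mat_list_prod (map (label_matrix E lab) eps) *v vR)) / (vI \<bullet> vR))" using \<mu>I_cyl by blast
    let ?u = "mat_list_prod (map (label_matrix E lab) eps) *v vR"
    have vu: "vI \<bullet> ?u = (\<Sum>j\<in>UNIV. if j \<in> I then ?u $ j else 0)"
      unfolding vI_def inner_vec_def by (rule sum.cong) auto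
    have "(\<Sum>j\<in>UNIV. wI j * (inverse (lam ^ length eps) * ?u $ j / vR $ j)) =
        (\<Sum>j\<in>UNIV. inverse (lam ^ length eps) * (if j \<in> I then ?u $ j else 0) / D)"
      using vR_pos by (intro sum.cong refl) (auto simp: wI_def field_simps)
    also have "\<dots> = inverse (lam ^ length eps) * (\<Sum>j\<in>UNIV. if j \<in> I then ?u $ j else 0) / D"
      by (simp only: sum_divide_distrib[symmetric] sum_distrib_left[symmetric])
    finally have "lam powi (- int (length eps)) * (vI \<bullet> ?u) / (vI \<bullet> vR) =
        (\<Sum>j\<in>UNIV. wI j * (inverse (lam ^ length eps) * ?u $ j / vR $ j))"
      by (simp add: pw vu D_def)
    thus "emeasure \<mu>I (cylinder A eps) = ennreal (\<Sum>j\<in>UNIV. wI j *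
      (inverse (lam ^ length eps) * ?u $ j / vR $ j))" using e by simp
  qed
  note R2 = final_generic[OF \<mu>I_sets wI sI cI]
  show ?thesis using R1 R2 by auto
qed

end
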